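(* Let $p:E\to X$ be an extremally disconnected bundle. Then $\Gamma^1_p$ is a stonean sheaf (i.e. a sheaf for the dense Grothendieck topology on $\mathcal{O}(X)$), and $\Gamma^{1/2}_p=\Gamma^1_p\restriction\mathrm{RO}(X)^+$ is a sheaf both for the sup Grothendieck topology and for the dense Grothendieck topology on $\mathrm{RO}(X)^+$.
   Context: An extremally disconnected bundle is a continuous map $p:E\to X$ where $E$ is a locally compact Hausdorff space, $X$ is a compact Hausdorff extremally disconnected space (closures of open sets are open), and $p[E]$ is a dense open subset of $X$. $\beta_0(E)=E\cup\{\infty\}$ is the one-point compactification of $E$. A local section of $p$ over an open $D\subseteq X$ is a continuous $s:D\to E$ with $p\circ s=\mathrm{id}_D$. $\mathcal{O}(X)$ is the set of non-empty open subsets of $X$; for $U\in\mathcal{O}(X)$, $\Gamma^1_p(U)$ is the set of continuous $f:U\to\beta_0(E)$ such that $\{x\in U:f(x)\in E\}$ contains an open dense subset $D_f$ of $U$ with $f\restriction D_f$ a local section of $p$ over $D_f$; restriction maps are restriction of functions. $\mathrm{RO}(X)^+$ is the set of non-empty regular open sets ordered by inclusion. For a partial order $P$ and presheaf $\mathcal{F}:P^{\mathrm{op}}\to\mathbf{Set}$ (write $f\restriction s$ for $\mathcal{F}(s\le t)(f)$), a family $\{f_i\in\mathcal{F}(p_i)\}$ is compatible if $f_i\restriction r=f_j\restriction r$ for all $r\le p_i,p_j$; a collation on $p$ is $f\in\mathcal{F}(p)$ with $f\restriction r=f_i\restriction r$ for all $i$ and $r\le p,p_i$; $\{p_i\}$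 is a dense covering of $p$ if for every $q\le p$ some $s$ lies below both $q$ and some $p_i$; if $P$ has all non-empty suprema, $\{p_i\}$ is a complete covering of $p$ if each $p_i\le p$ and $\bigvee p_i=p$. $\mathcal{F}$ is a sheaf for the dense (resp. sup) Grothendieck topology if every compatible family indexed by a dense (resp. complete) covering of $p$ has a unique collation on $p$. *)

theory Defs
  imports "HOL-Analysis.Analysis"
begin

definition extremally_disconnected :: "'a topology \<Rightarrow> bool" where
  "extremally_disconnected X \<longleftrightarrow> (\<forall>U. openin X U \<longrightarrow> openin X (X closure_of U))"

definition ed_bundle :: "'e topology \<Rightarrow> 'x topology \<Rightarrow> ('e \<Rightarrow> 'x) \<Rightarrow> bool" where
  "ed_bundle E X p \<longleftrightarrow>
     locally_compact_space E \<and> Hausdorff_space E \<and>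
     compact_space X \<and> Hausdorff_space X \<and> extremally_disconnected X \<and>
     continuous_map E X p \<and>
     openin X (p ` topspace E) \<and> X closure_of (p ` topspace E) = topspace X"

definition local_section :: "'e topology \<Rightarrow> 'x topology \<Rightarrow> ('e \<Rightarrow> 'x) \<Rightarrow> 'x set \<Rightarrow> ('x \<Rightarrow> 'e) \<Rightarrow> bool" where
  "local_section E X p D s \<longleftrightarrow> continuous_map (subtopology X D) E s \<and> (\<forall>x\<in>D. p (s x) = x)"

definition nonempty_opens :: "'x topology \<Rightarrow> 'x set set" where
  "nonempty_opens X = {U. openin X U \<and> U \<noteq> {}}"

definition regular_open :: "'x topology \<Rightarrow> 'x set \<Rightarrow> bool" where
  "regular_open X U \<longleftrightarrow> X interior_of (X closure_of U) = U"

definition nonempty_regular_opens :: "'x topology \<Rightarrow> 'x set set" where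
  "nonempty_regular_opens X = {U. regular_open X U \<and> U \<noteq> {}}"

text \<open>The one-point compactification beta_0(E) is
  \<open>Alexandroff_compactification E\<close> on \<open>'e option\<close>, with \<open>None\<close> the point at infinity
  and \<open>Some\<close> the embedding of E.  Sections over U are functions on U, made
  extensional (value \<open>undefined\<close> outside U); restriction is \<open>restrict\<close>.\<close>
definition Gamma1 :: "'e topology \<Rightarrow> 'x topology \<Rightarrow> ('e \<Rightarrow> 'x) \<Rightarrow> 'x set \<Rightarrow> ('x \<Rightarrow> 'e option) set" where
  "Gamma1 E X p U = {f.
      continuous_map (subtopology X U) (Alexandroff_compactification E) f \<and>
      (\<exists>D. openin (subtopology X U) D \<and> U \<subseteq> X closure_of D \<and>
           D \<subseteq> {x \<in> U. f x \<in> Some ` topspace E} \<and>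
           local_section E X p D (\<lambda>x. the (f x))) \<and>
      (\<forall>x. x \<notin> U \<longrightarrow> f x = undefined)}"

definition restr_sec :: "'x set \<Rightarrow> ('x \<Rightarrow> 'b) \<Rightarrow> ('x \<Rightarrow> 'b)" where
  "restr_sec V f = restrict f V"

text \<open>Generic presheaves on a partial order (P, le), given by the sets F q of
  sections over q and a restriction operation res s f (restriction of f to s).\<close>
definition compatible_family ::
  "'p set \<Rightarrow> ('p \<Rightarrow> 'p \<Rightarrow> bool) \<Rightarrow> ('p \<Rightarrow> 'f set) \<Rightarrow> ('p \<Rightarrow> 'f \<Rightarrow> 'f) \<Rightarrow> 'p set \<Rightarrow> ('p \<Rightarrow> 'f) \<Rightarrow> bool" where
  "compatible_family P le F res C f \<longleftrightarrow>
     (\<forall>c\<in>C. f c \<in> F c) \<and>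
     (\<forall>c\<in>C. \<forall>d\<in>C. \<forall>r\<in>P. le r c \<and> le r d \<longrightarrow> res r (f c) = res r (f d))"

definition is_collation ::
  "'p set \<Rightarrow> ('p \<Rightarrow> 'p \<Rightarrow> bool) \<Rightarrow> ('p \<Rightarrow> 'f set) \<Rightarrow> ('p \<Rightarrow> 'f \<Rightarrow> 'f) \<Rightarrow> 'p set \<Rightarrow> ('p \<Rightarrow> 'f) \<Rightarrow> 'p \<Rightarrow> 'f \<Rightarrow> bool" where
  "is_collation P le F res C f q g \<longleftrightarrow>
     g \<in> F q \<and> (\<forall>c\<in>C. \<forall>r\<in>P. le r q \<and> le r c \<longrightarrow> res r g = res r (f c))"

definition dense_covering :: "'p set \<Rightarrow> ('p \<Rightarrow> 'p \<Rightarrow> bool) \<Rightarrow> 'p set \<Rightarrow> 'p \<Rightarrow> bool" where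
  "dense_covering P le C q \<longleftrightarrow> C \<subseteq> P \<and>
     (\<forall>q'\<in>P. le q' q \<longrightarrow> (\<exists>s\<in>P. \<exists>c\<in>C. le s q' \<and> le s c))"

definition complete_covering :: "'p set \<Rightarrow> ('p \<Rightarrow> 'p \<Rightarrow> bool) \<Rightarrow> 'p set \<Rightarrow> 'p \<Rightarrow> bool" where
  "complete_covering P le C q \<longleftrightarrow> C \<subseteq> P \<and> C \<noteq> {} \<and>
     (\<forall>c\<in>C. le c q) \<and> (\<forall>u\<in>P. (\<forall>c\<in>C. le c u) \<longrightarrow> le q u)"

definition is_sheaf_for ::
  "'p set \<Rightarrow> ('p \<Rightarrow> 'p \<Rightarrow> bool) \<Rightarrow> ('p \<Rightarrow> 'f set) \<Rightarrow> ('p \<Rightarrow> 'f \<Rightarrow> 'f) \<Rightarrow> ('p set \<Rightarrow> 'p \<Rightarrow> bool) \<Rightarrow> bool" where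
  "is_sheaf_for P le F res Cov \<longleftrightarrow>
     (\<forall>q\<in>P. \<forall>C f. Cov C q \<and> compatible_family P le F res C f \<longrightarrow>
        (\<exists>!g. is_collation P le F res C f q g))"

end

theory Submission
  imports Defs
begin



lemma ed_disjoint_closures:
  assumes ED: "extremally_disconnected X" and U: "openin X U" and V: "openin X V" and d: "U \<inter> V = {}"
  shows "X closure_of U \<inter> X closure_of V = {}"
proof -
  have o: "openin X (X closure_of U)" using ED U by (simp add: extremally_disconnected_def)
  have "X closure_of U \<inter> V = {}"
    using openin_Int_closure_of_eq_empty[OF V, of U] d by blast
  hence "X closure_of U \<inter> X closure_of V = {}"
    using openin_Int_closure_of_eq_empty[OF o, of V] by blast
  thus ?thesis .
qed

lemma preimage_open_in_X:
  assumes W: "openin X W" and F: "continuous_map (subtopology X W) K F" and A: "openin K A"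
  shows "openin X {w \<in> W. F w \<in> A}"
proof -
  have "openin (subtopology X W) {x \<in> topspace (subtopology X W). F x \<in> A}"
    using F A by (simp add: continuous_map_def)
  moreover have "topspace (subtopology X W) = W" using W openin_subset by fastforce
  ultimately show ?thesis using W openin_trans_full by fastforce
qed

lemma cmap_in:
  assumes F: "continuous_map (subtopology X W) K F" and W: "openin X W" and w: "w \<in> W"
  shows "F w \<in> topspace K"
proof -
  have "w \<in> topspace (subtopology X W)" using w openin_subset[OF W] by auto
  thus ?thesis using F unfolding continuous_map_def by blast
qed


lemma ed_cluster_exists:
  assumes K: "compact_space K" and W: "openin X W" and F: "continuous_map (subtopology X W) K F"
    and x: "x \<in> X closure_of W"
  shows "\<exists>a\<in>topspace K. \<forall>A. openin K A \<and> a \<in> A \<longrightarrow> x \<in> X closure_of {w \<in> W. F w \<in> A}"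
proof (rule ccontr)
  assume "\<not> ?thesis"
  hence h1: "\<forall>a\<in>topspace K. \<exists>A. openin K A \<and> a \<in> A \<and> x \<notin> X closure_of {w \<in> W. F w \<in> A}"
    by blast
  then obtain A where A: "\<forall>a\<in>topspace K. openin K (A a) \<and> a \<in> A a \<and> x \<notin> X closure_of {w \<in> W. F w \<in> A a}"
    using bchoice[OF h1] by blast
  have xt: "x \<in> topspace X" using x in_closure_of by fast
  have h2: "\<exists>N. openin X N \<and> x \<in> N \<and> N \<inter> S = {}" if "x \<notin> X closure_of S" for S
  proof -
    have "\<not>(\<forall>T. x \<in> T \<and> openin X T \<longrightarrow> (\<exists>y. y \<in> S \<and> y \<in> T))"
      using that xt in_closure_of by metis
    then obtain T where T: "x \<in> T" "openin X T" "\<And>y. y \<in> S \<Longrightarrow> y \<notin> T" by blast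
    have "T \<inter> S = {}" using T(3) by blast
    thus ?thesis using T(1,2) by blast
  qed
  have h3: "\<forall>a\<in>topspace K. \<exists>N. openin X N \<and> x \<in> N \<and> N \<inter> {w \<in> W. F w \<in> A a} = {}"
    using A h2 by blast
  then obtain N where N: "\<forall>a\<in>topspace K. openin X (N a) \<and> x \<in> N a \<and> N a \<inter> {w \<in> W. F w \<in> A a} = {}"
    using bchoice[OF h3] by blast
  have cov: "topspace K \<subseteq> \<Union>(A ` topspace K)" using A by blast
  have opn: "\<forall>U\<in>A ` topspace K. openin K U" using A by blast
  obtain FF where FF: "finite FF" "FF \<subseteq> A ` topspace K" "topspace K \<subseteq> \<Union>FF"
    using compact_space_alt[THEN iffD1, OF K, rule_format, of "A ` topspace K"] cov opn by blast
  then obtain T where T: "T \<subseteq> topspace K" "finite T" "FF = A ` T"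
    using finite_subset_image[OF FF(1) FF(2)] by blast
  define N0 where "N0 = (\<Inter>i\<in>T. N i) \<inter> topspace X"
  have "openin X N0" unfolding N0_def
  proof (rule openin_INT)
    show "finite T" using T by simp
    fix i assume "i \<in> T" thus "openin X (N i)" using N T by blast
  qed
  moreover have "x \<in> N0" unfolding N0_def using T N xt by blast
  ultimately have "\<exists>y. y \<in> W \<and> y \<in> N0" using x unfolding in_closure_of by blast
  then obtain w where w: "w \<in> W" "w \<in> N0" by blast
  have "F w \<in> topspace K" using cmap_in[OF F W w(1)] .
  then obtain a where a: "a \<in> T" "F w \<in> A a" using FF T by blast
  have aK: "a \<in> topspace K" using a(1) T(1) by blast
  have "w \<in> N a" using w(2) a(1) unfolding N0_def by blast
  moreover have "N a \<inter> {w \<in> W. F w \<in> A a} = {}" using N aK by blast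
  ultimately show False using a(2) w(1) by blast
qed

lemma ed_extend:
  assumes ED: "extremally_disconnected X" and K: "compact_space K" "Hausdorff_space K"
    and W: "openin X W" and F: "continuous_map (subtopology X W) K F"
    and Wq: "W \<subseteq> q" and qW: "q \<subseteq> X closure_of W"
  shows "\<exists>G. continuous_map (subtopology X q) K G \<and> (\<forall>x\<in>W. G x = F x)"
proof -
  define cl where "cl x a \<longleftrightarrow> a \<in> topspace K \<and> (\<forall>A. openin K A \<and> a \<in> A \<longrightarrow> x \<in> X closure_of {w \<in> W. F w \<in> A})" for x a
  have reg: "regular_space K" using K compact_Hausdorff_imp_regular_space by blast
  have Fimg: "F w \<in> topspace K" if "w \<in> W" for w using cmap_in[OF F W that] .
  have ex: "\<exists>a. cl x a" if "x \<in> q" for x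
    using ed_cluster_exists[OF K(1) W F] that qW unfolding cl_def by blast
  have uniq: "a = b" if "cl x a" "cl x b" for x a b
  proof (rule ccontr)
    assume "a \<noteq> b"
    moreover have "a \<in> topspace K" "b \<in> topspace K" using that unfolding cl_def by auto
    ultimately obtain A B where AB: "openin K A" "openin K B" "a \<in> A" "b \<in> B" "disjnt A B"
      using K(2) unfolding Hausdorff_space_def by metis
    have "x \<in> X closure_of {w \<in> W. F w \<in> A}" "x \<in> X closure_of {w \<in> W. F w \<in> B}"
      using that AB unfolding cl_def by auto
    moreover have "X closure_of {w \<in> W. F w \<in> A} \<inter> X closure_of {w \<in> W. F w \<in> B} = {}"
      by (rule ed_disjoint_closures[OF ED preimage_open_in_X[OF W F AB(1)] preimage_open_in_X[OF W F AB(2)]])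
         (use AB(5) in \<open>auto simp: disjnt_def\<close>)
    ultimately show False by blast
  qed
  have clD: "x \<in> X closure_of {w \<in> W. F w \<in> A}" if "cl x a" "openin K A" "a \<in> A" for x a A
    using that unfolding cl_def by blast
  have clT: "a \<in> topspace K" if "cl x a" for x a
    using that unfolding cl_def by blast
  define G where "G x = (THE a. cl x a)" for x
  have Gcl: "cl x (G x)" if xq0: "x \<in> q" for x
  proof -
    obtain a where a: "cl x a" using ex[OF xq0] by blast
    show ?thesis unfolding G_def by (rule theI[of "cl x" a]) (use a uniq in blast)+
  qed
  have GW: "G x = F x" if "x \<in> W" for x
  proof -
    have "cl x (F x)" unfolding cl_def
    proof (intro conjI allI impI)
      show "F x \<in> topspace K" using Fimg that .
      fix A assume "openin K A \<and> F x \<in> A"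
      hence "x \<in> {w \<in> W. F w \<in> A}" using that by auto
      moreover have "x \<in> topspace X" using that W openin_subset by blast
      ultimately show "x \<in> X closure_of {w \<in> W. F w \<in> A}"
        using closure_of_subset[of "{w \<in> W. F w \<in> A}" X] openin_subset[OF W] by blast
    qed
    thus ?thesis using uniq Gcl that Wq by blast
  qed
  have "continuous_map (subtopology X q) K G"
    unfolding continuous_map_def
  proof (intro conjI allI impI)
    show "G \<in> topspace (subtopology X q) \<rightarrow> topspace K"
    proof
      fix x assume "x \<in> topspace (subtopology X q)"
      hence "x \<in> q" by simp
      thus "G x \<in> topspace K" using clT[OF Gcl] by blast
    qed
    fix A assume A: "openin K A"
    show "openin (subtopology X q) {x \<in> topspace (subtopology X q). G x \<in> A}"
      unfolding openin_subopen[of _ "{x \<in> topspace (subtopology X q). G x \<in> A}"]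
    proof
      fix x assume xq: "x \<in> {x \<in> topspace (subtopology X q). G x \<in> A}"
      hence xq': "x \<in> q" "G x \<in> A" by auto
      obtain U V where UV: "openin K U" "closedin K V" "G x \<in> U" "U \<subseteq> V" "V \<subseteq> A"
      proof -
        have "neighbourhood_base_of (closedin K) K" using reg neighbourhood_base_of_closedin by blast
        hence "\<exists>U V. openin K U \<and> closedin K V \<and> G x \<in> U \<and> U \<subseteq> V \<and> V \<subseteq> A"
          using A xq'(2) unfolding neighbourhood_base_of by blast
        thus ?thesis using that by blast
      qed
      define S where "S = {w \<in> W. F w \<in> U}"
      have So: "openin X S" unfolding S_def using preimage_open_in_X[OF W F UV(1)] .
      have xS: "x \<in> X closure_of S" unfolding S_def by (rule clD[OF Gcl[OF xq'(1)] UV(1) UV(3)])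
      have cSo: "openin X (X closure_of S)" using ED So by (simp add: extremally_disconnected_def)
      show "\<exists>T. openin (subtopology X q) T \<and> x \<in> T \<and> T \<subseteq> {x \<in> topspace (subtopology X q). G x \<in> A}"
      proof (intro exI conjI)
        show "openin (subtopology X q) (q \<inter> X closure_of S)"
          using cSo by (simp add: openin_subtopology_Int2)
        show "x \<in> q \<inter> X closure_of S" using xq' xS by blast
        show "q \<inter> X closure_of S \<subseteq> {x \<in> topspace (subtopology X q). G x \<in> A}"
        proof
          fix y assume y: "y \<in> q \<inter> X closure_of S"
          have "G y \<in> V"
          proof (rule ccontr)
            assume nv: "G y \<notin> V"
            have o2: "openin K (topspace K - V)" using UV(2) by blast
            have yq: "y \<in> q" using y by blast
            have "G y \<in> topspace K - V" using nv clT[OF Gcl[OF yq]] by blast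
            hence "y \<in> X closure_of {w \<in> W. F w \<in> topspace K - V}"
              by (rule clD[OF Gcl[OF yq] o2])
            moreover have "X closure_of S \<inter> X closure_of {w \<in> W. F w \<in> topspace K - V} = {}"
              by (rule ed_disjoint_closures[OF ED So preimage_open_in_X[OF W F o2]])
                 (use UV(4) in \<open>auto simp: S_def\<close>)
            ultimately show False using y by blast
          qed
          thus "y \<in> {x \<in> topspace (subtopology X q). G x \<in> A}"
          proof -
            have "y \<in> topspace X" using y closure_of_subset_topspace[of X S] by blast
            thus ?thesis using UV(5) y \<open>G y \<in> V\<close> by auto
          qed
        qed
      qed
    qed
  qed
  thus ?thesis using GW by blast
qed



lemma closure_ofE:
  assumes "x \<in> X closure_of S" "openin X T" "x \<in> T"
  shows "\<exists>y. y \<in> S \<and> y \<in> T"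
  using assms unfolding in_closure_of by meson

lemma glue:
  assumes B: "ed_bundle E X p" and q: "openin X q"
    and Co: "\<And>c. c \<in> C \<Longrightarrow> openin X c"
    and fC: "\<And>c. c \<in> C \<Longrightarrow> f c \<in> Gamma1 E X p c"
    and agree: "\<And>c d x. c \<in> C \<Longrightarrow> d \<in> C \<Longrightarrow> x \<in> c \<Longrightarrow> x \<in> d \<Longrightarrow> f c x = f d x"
    and dense: "q \<subseteq> X closure_of (\<Union>c\<in>C. c \<inter> q)"
  shows "\<exists>g \<in> Gamma1 E X p q. \<forall>c\<in>C. \<forall>x\<in>c \<inter> q. g x = f c x"
proof -
  let ?K = "Alexandroff_compactification E"
  have ED: "extremally_disconnected X" and Kc: "compact_space ?K" and KH: "Hausdorff_space ?K"
    using B by (auto simp: ed_bundle_def Hausdorff_space_Alexandroff_compactification)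
  have qX: "q \<subseteq> topspace X" using q openin_subset by blast
  define W where "W = (\<Union>c\<in>C. c \<inter> q)"
  have Wo: "openin X W" unfolding W_def
    by (rule openin_Union) (use Co q in auto)
  have Wq: "W \<subseteq> q" unfolding W_def by blast
  have cont_c: "continuous_map (subtopology X c) ?K (f c)" if "c \<in> C" for c
    using fC[OF that] by (simp add: Gamma1_def)
  have h1: "topspace (subtopology X W) \<subseteq> (\<Union>c\<in>C. c \<inter> q)" unfolding W_def by auto
  have h2: "openin (subtopology X W) (c \<inter> q)" if "c \<in> C" for c
    unfolding openin_open_subtopology[OF Wo] using Co[OF that] q that unfolding W_def by blast
  have h3: "continuous_map (subtopology (subtopology X W) (c \<inter> q)) ?K (f c)" if "c \<in> C" for c
  proof -
    have "W \<inter> (c \<inter> q) = c \<inter> q" unfolding W_def using that by blast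
    thus ?thesis unfolding subtopology_subtopology
      using continuous_map_from_subtopology_mono[OF cont_c[OF that], of "c \<inter> q"] by simp
  qed
  have h4: "f c x = f d x" if "c \<in> C" "d \<in> C" "x \<in> topspace (subtopology X W) \<inter> (c \<inter> q) \<inter> (d \<inter> q)" for c d x
    using agree that by blast
  obtain F where F: "continuous_map (subtopology X W) ?K F"
    and FF: "\<And>x c. c \<in> C \<Longrightarrow> x \<in> topspace (subtopology X W) \<inter> (c \<inter> q) \<Longrightarrow> F x = f c x"
    using pasting_lemma_exists[where X="subtopology X W" and I=C and T="\<lambda>c. c \<inter> q" and Y="?K" and f=f, OF h1 h2 h3 h4] by blast
  obtain G where G: "continuous_map (subtopology X q) ?K G" and GW: "\<forall>x\<in>W. G x = F x"
    using ed_extend[OF ED Kc KH Wo F Wq] dense unfolding W_def by blast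
  define g where "g = restrict G q"
  have gcont: "continuous_map (subtopology X q) ?K g"
    by (rule continuous_map_eq[OF G]) (simp add: g_def)
  have gf: "g x = f c x" if "c \<in> C" "x \<in> c" "x \<in> q" for c x
  proof -
    have xW: "x \<in> W" using that unfolding W_def by blast
    have "x \<in> topspace (subtopology X W) \<inter> (c \<inter> q)" using xW that qX by auto
    hence "F x = f c x" using FF that(1) by blast
    thus ?thesis using GW xW that(3) unfolding g_def by simp
  qed
  have "\<forall>c\<in>C. \<exists>Dc. openin (subtopology X c) Dc \<and> c \<subseteq> X closure_of Dc \<and>
           Dc \<subseteq> {x \<in> c. f c x \<in> Some ` topspace E} \<and> local_section E X p Dc (\<lambda>x. the (f c x))"
    using fC unfolding Gamma1_def by blast
  from bchoice[OF this] obtain D where D0: "\<forall>c\<in>C. openin (subtopology X c) (D c) \<and> c \<subseteq> X closure_of (D c) \<and>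
           D c \<subseteq> {x \<in> c. f c x \<in> Some ` topspace E} \<and> local_section E X p (D c) (\<lambda>x. the (f c x))"
    by blast
  have D: "openin (subtopology X c) (D c) \<and> c \<subseteq> X closure_of (D c) \<and>
           D c \<subseteq> {x \<in> c. f c x \<in> Some ` topspace E} \<and> local_section E X p (D c) (\<lambda>x. the (f c x))"
    if "c \<in> C" for c using D0 that by blast
  have Do: "openin X (D c)" if "c \<in> C" for c
    using D[OF that] Co[OF that] openin_trans_full by blast
  have Dc: "D c \<subseteq> c" if "c \<in> C" for c using D[OF that] by blast
  define DD where "DD = (\<Union>c\<in>C. D c \<inter> q)"
  have DDo: "openin X DD" unfolding DD_def
    by (rule openin_Union) (use Do q in auto)
  have DDq: "DD \<subseteq> q" unfolding DD_def by blast
  have DDo': "openin (subtopology X q) DD" using DDo DDq openin_open_subtopology[OF q] by blast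
  have DDd: "q \<subseteq> X closure_of DD"
  proof
    fix x assume xq: "x \<in> q"
    show "x \<in> X closure_of DD" unfolding in_closure_of
    proof (intro conjI allI impI)
      show "x \<in> topspace X" using xq qX by blast
      fix T assume T: "x \<in> T \<and> openin X T"
      have "x \<in> X closure_of W" using dense xq unfolding W_def by blast
      moreover have "openin X (T \<inter> q)" using T q by blast
      ultimately obtain w where w: "w \<in> W" "w \<in> T \<inter> q" using xq T closure_ofE by (metis IntI)
      then obtain c where c: "c \<in> C" "w \<in> c" unfolding W_def by blast
      have "w \<in> X closure_of (D c)" using D[OF c(1)] c(2) by blast
      moreover have "openin X (T \<inter> q \<inter> c)" using T q Co[OF c(1)] by blast
      ultimately obtain y where "y \<in> D c" "y \<in> T \<inter> q \<inter> c" using w c closure_ofE by (metis IntI)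
      thus "\<exists>y. y \<in> DD \<and> y \<in> T" unfolding DD_def using c(1) by blast
    qed
  qed
  have DDs: "DD \<subseteq> {x \<in> q. g x \<in> Some ` topspace E}"
  proof
    fix x assume "x \<in> DD"
    then obtain c where c: "c \<in> C" "x \<in> D c" "x \<in> q" unfolding DD_def by blast
    have "f c x \<in> Some ` topspace E" using D[OF c(1)] c(2) by blast
    thus "x \<in> {x \<in> q. g x \<in> Some ` topspace E}" using gf[OF c(1) _ c(3)] Dc[OF c(1)] c by auto
  qed
  have ls: "local_section E X p DD (\<lambda>x. the (g x))"
    unfolding local_section_def
  proof (intro conjI ballI)
    show "continuous_map (subtopology X DD) E (\<lambda>x. the (g x))"
    proof (rule pasting_lemma[where I=C and X="subtopology X DD" and T="\<lambda>c. D c \<inter> q" and Y=E and f="\<lambda>c x. the (f c x)"])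
      fix c assume c: "c \<in> C"
      show "openin (subtopology X DD) (D c \<inter> q)"
        unfolding openin_open_subtopology[OF DDo] using Do[OF c] q c unfolding DD_def by blast
      have "DD \<inter> (D c \<inter> q) = D c \<inter> q" unfolding DD_def using c by blast
      moreover have "local_section E X p (D c) (\<lambda>x. the (f c x))" using D[OF c] by blast
      hence "continuous_map (subtopology X (D c)) E (\<lambda>x. the (f c x))"
        unfolding local_section_def by blast
      ultimately show "continuous_map (subtopology (subtopology X DD) (D c \<inter> q)) E (\<lambda>x. the (f c x))"
        unfolding subtopology_subtopology using continuous_map_from_subtopology_mono[of X "D c" E "\<lambda>x. the (f c x)" "D c \<inter> q"] by simp
    next
      fix c d x assume cd: "c \<in> C" "d \<in> C" "x \<in> topspace (subtopology X DD) \<inter> (D c \<inter> q) \<inter> (D d \<inter> q)"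
      have "x \<in> c" using cd(3) Dc[OF cd(1)] by blast
      moreover have "x \<in> d" using cd(3) Dc[OF cd(2)] by blast
      ultimately show "the (f c x) = the (f d x)" using agree[OF cd(1) cd(2)] by simp
    next
      fix x assume "x \<in> topspace (subtopology X DD)"
      then obtain c where c: "c \<in> C" "x \<in> D c" "x \<in> q" unfolding DD_def by auto
      have "x \<in> c" using c(2) Dc[OF c(1)] by blast
      hence "g x = f c x" using gf[OF c(1) _ c(3)] by simp
      thus "\<exists>j. j \<in> C \<and> x \<in> D j \<inter> q \<and> the (g x) = the (f j x)"
        using c by auto
    qed
  next
    fix x assume "x \<in> DD"
    then obtain c where c: "c \<in> C" "x \<in> D c" "x \<in> q" unfolding DD_def by blast
    have "local_section E X p (D c) (\<lambda>x. the (f c x))" using D[OF c(1)] by blast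
    hence "p (the (f c x)) = x" using c(2) unfolding local_section_def by blast
    moreover have "x \<in> c" using c(2) Dc[OF c(1)] by blast
    ultimately show "p (the (g x)) = x" using gf[OF c(1) _ c(3)] by simp
  qed
  have gu: "\<forall>x. x \<notin> q \<longrightarrow> g x = undefined" by (simp add: g_def)
  have "g \<in> Gamma1 E X p q"
    unfolding Gamma1_def mem_Collect_eq using gcont gu DDo' DDd DDs ls by blast
  moreover have "\<forall>c\<in>C. \<forall>x\<in>c \<inter> q. g x = f c x" using gf by blast
  ultimately show ?thesis by blast
qed

lemma uniq_sec:
  assumes B: "ed_bundle E X p" and q: "openin X q"
    and g1: "g1 \<in> Gamma1 E X p q" and g2: "g2 \<in> Gamma1 E X p q"
    and dense: "q \<subseteq> X closure_of W" and eq: "\<And>x. x \<in> W \<Longrightarrow> g1 x = g2 x"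
  shows "g1 = g2"
proof
  fix x
  let ?K = "Alexandroff_compactification E"
  have KH: "Hausdorff_space ?K"
    using B by (auto simp: ed_bundle_def Hausdorff_space_Alexandroff_compactification)
  have c1: "continuous_map (subtopology X q) ?K g1" and c2: "continuous_map (subtopology X q) ?K g2"
    using g1 g2 by (auto simp: Gamma1_def)
  show "g1 x = g2 x"
  proof (cases "x \<in> q")
    case False thus ?thesis using g1 g2 by (simp add: Gamma1_def)
  next
    case xq: True
    show ?thesis
    proof (rule ccontr)
      assume ne: "g1 x \<noteq> g2 x"
      have "g1 x \<in> topspace ?K" "g2 x \<in> topspace ?K" using cmap_in[OF c1 q xq] cmap_in[OF c2 q xq] by auto
      then obtain A B where AB: "openin ?K A" "openin ?K B" "g1 x \<in> A" "g2 x \<in> B" "disjnt A B"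
        using KH ne unfolding Hausdorff_space_def by metis
      define Ob where "Ob = {y \<in> q. g1 y \<in> A} \<inter> {y \<in> q. g2 y \<in> B}"
      have "openin X Ob" unfolding Ob_def
        using preimage_open_in_X[OF q c1 AB(1)] preimage_open_in_X[OF q c2 AB(2)] by blast
      moreover have "x \<in> Ob" using xq AB unfolding Ob_def by blast
      moreover have "x \<in> X closure_of W" using dense xq by blast
      ultimately obtain w where "w \<in> W" "w \<in> Ob" using closure_ofE by metis
      thus False using eq AB(5) unfolding Ob_def disjnt_def by auto
    qed
  qed
qed



lemma sheaf_generic:
  assumes B: "ed_bundle E X p"
    and Po: "\<And>c. c \<in> P \<Longrightarrow> openin X c"
    and Pint: "\<And>c d. c \<in> P \<Longrightarrow> d \<in> P \<Longrightarrow> c \<inter> d \<noteq> {} \<Longrightarrow> c \<inter> d \<in> P"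
    and Cv: "\<And>q C. q \<in> P \<Longrightarrow> Cov C q \<Longrightarrow> C \<subseteq> P \<and> q \<subseteq> X closure_of (\<Union>c\<in>C. c \<inter> q)"
  shows "is_sheaf_for P (\<subseteq>) (Gamma1 E X p) restr_sec Cov"
  unfolding is_sheaf_for_def
proof (intro ballI allI impI)
  fix q C f
  assume qP: "q \<in> P" and H: "Cov C q \<and> compatible_family P (\<subseteq>) (Gamma1 E X p) restr_sec C f"
  have CP: "C \<subseteq> P" and dn: "q \<subseteq> X closure_of (\<Union>c\<in>C. c \<inter> q)" using Cv[OF qP] H by auto
  have fC: "f c \<in> Gamma1 E X p c" if "c \<in> C" for c
    using H that unfolding compatible_family_def by blast
  have comp: "restr_sec r (f c) = restr_sec r (f d)"
    if "c \<in> C" "d \<in> C" "r \<in> P" "r \<subseteq> c" "r \<subseteq> d" for c d r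
    using H that unfolding compatible_family_def by blast
  have agree: "f c x = f d x" if cd: "c \<in> C" "d \<in> C" "x \<in> c" "x \<in> d" for c d x
  proof -
    have r: "c \<inter> d \<in> P" using Pint CP cd by blast
    have "restr_sec (c \<inter> d) (f c) x = restr_sec (c \<inter> d) (f d) x"
      using comp[OF cd(1) cd(2) r] by simp
    thus ?thesis using cd by (simp add: restr_sec_def)
  qed
  have qo: "openin X q" using Po qP by blast
  have Co: "openin X c" if "c \<in> C" for c using Po CP that by blast
  obtain g where g: "g \<in> Gamma1 E X p q" and gf: "\<forall>c\<in>C. \<forall>x\<in>c \<inter> q. g x = f c x"
    using glue[OF B qo Co fC agree dn] by blast
  have coll: "is_collation P (\<subseteq>) (Gamma1 E X p) restr_sec C f q g"
    unfolding is_collation_def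
  proof (intro conjI g ballI impI)
    fix c r assume c: "c \<in> C" and r: "r \<in> P" and rr: "r \<subseteq> q \<and> r \<subseteq> c"
    show "restr_sec r g = restr_sec r (f c)"
    proof
      fix x show "restr_sec r g x = restr_sec r (f c) x"
        using gf c rr by (auto simp: restr_sec_def)
    qed
  qed
  show "\<exists>!g. is_collation P (\<subseteq>) (Gamma1 E X p) restr_sec C f q g"
  proof (rule ex1I[of _ g])
    show "is_collation P (\<subseteq>) (Gamma1 E X p) restr_sec C f q g" by (rule coll)
    fix g' assume c': "is_collation P (\<subseteq>) (Gamma1 E X p) restr_sec C f q g'"
    have g': "g' \<in> Gamma1 E X p q" using c' unfolding is_collation_def by blast
    show "g' = g"
    proof (rule uniq_sec[OF B qo g' g dn])
      fix x assume "x \<in> (\<Union>c\<in>C. c \<inter> q)"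
      then obtain c where c: "c \<in> C" "x \<in> c" "x \<in> q" by blast
      have r: "c \<inter> q \<in> P" using Pint CP c qP by blast
      have "restr_sec (c \<inter> q) g' = restr_sec (c \<inter> q) (f c)"
        using c' c(1) r unfolding is_collation_def by blast
      hence "g' x = f c x" using c by (metis IntI restr_sec_def restrict_apply')
      moreover have "g x = f c x" using gf c(1) c(2) c(3) by simp
      ultimately show "g' x = g x" by simp
    qed
  qed
qed

lemma ro_clopen:
  assumes ED: "extremally_disconnected X" and r: "regular_open X c"
  shows "openin X c \<and> closedin X c"
proof -
  have o: "openin X c" using r unfolding regular_open_def by (metis openin_interior_of)
  have "openin X (X closure_of c)" using ED o unfolding extremally_disconnected_def by blast
  hence "X interior_of (X closure_of c) = X closure_of c" by (rule interior_of_openin)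
  hence "c = X closure_of c" using r unfolding regular_open_def by simp
  hence "closedin X c" by (metis closedin_closure_of)
  thus ?thesis using o by blast
qed

lemma clopen_ro:
  assumes "openin X c" "closedin X c"
  shows "regular_open X c"
  unfolding regular_open_def using assms by (simp add: closure_of_closedin interior_of_openin)



lemma closure_ofI2:
  assumes "q \<subseteq> topspace X" and "\<And>x T. x \<in> q \<Longrightarrow> openin X T \<Longrightarrow> x \<in> T \<Longrightarrow> \<exists>y. y \<in> S \<and> y \<in> T"
  shows "q \<subseteq> X closure_of S"
proof
  fix x assume x: "x \<in> q"
  show "x \<in> X closure_of S" unfolding in_closure_of
  proof (intro conjI allI impI)
    show "x \<in> topspace X" using assms(1) x by blast
    fix T assume "x \<in> T \<and> openin X T"
    thus "\<exists>y. y \<in> S \<and> y \<in> T" using assms(2)[OF x] by blast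
  qed
qed

theorem mainTheorem11:
  fixes E :: "'e topology" and X :: "'x topology" and p :: "'e \<Rightarrow> 'x"
  assumes "ed_bundle E X p"
  shows "is_sheaf_for (nonempty_opens X) (\<subseteq>) (Gamma1 E X p) restr_sec
            (dense_covering (nonempty_opens X) (\<subseteq>))
       \<and> is_sheaf_for (nonempty_regular_opens X) (\<subseteq>) (Gamma1 E X p) restr_sec
            (complete_covering (nonempty_regular_opens X) (\<subseteq>))
       \<and> is_sheaf_for (nonempty_regular_opens X) (\<subseteq>) (Gamma1 E X p) restr_sec
            (dense_covering (nonempty_regular_opens X) (\<subseteq>))"
proof -
  note B = assms
  have ED: "extremally_disconnected X" using B by (simp add: ed_bundle_def)
  have P1o: "\<And>c. c \<in> nonempty_opens X \<Longrightarrow> openin X c" by (simp add: nonempty_opens_def)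
  have P1i: "\<And>c d. c \<in> nonempty_opens X \<Longrightarrow> d \<in> nonempty_opens X \<Longrightarrow> c \<inter> d \<noteq> {} \<Longrightarrow> c \<inter> d \<in> nonempty_opens X"
    by (simp add: nonempty_opens_def openin_Int)
  have P2o: "openin X c \<and> closedin X c" if "c \<in> nonempty_regular_opens X" for c
    using ro_clopen[OF ED] that by (simp add: nonempty_regular_opens_def)
  have P2i: "\<And>c d. c \<in> nonempty_regular_opens X \<Longrightarrow> d \<in> nonempty_regular_opens X \<Longrightarrow> c \<inter> d \<noteq> {} \<Longrightarrow> c \<inter> d \<in> nonempty_regular_opens X"
  proof -
    fix c d assume c: "c \<in> nonempty_regular_opens X" and d: "d \<in> nonempty_regular_opens X" and ne: "c \<inter> d \<noteq> {}"
    have "openin X (c \<inter> d)" "closedin X (c \<inter> d)" using P2o[OF c] P2o[OF d] by auto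
    hence "regular_open X (c \<inter> d)" by (rule clopen_ro)
    thus "c \<inter> d \<in> nonempty_regular_opens X" using ne by (simp add: nonempty_regular_opens_def)
  qed
  have ROcl: "X closure_of S \<in> nonempty_regular_opens X" if "openin X S" "S \<noteq> {}" for S
  proof -
    have o: "openin X (X closure_of S)" using ED that unfolding extremally_disconnected_def by blast
    have "regular_open X (X closure_of S)" by (rule clopen_ro[OF o closedin_closure_of])
    moreover have "S \<subseteq> X closure_of S" by (rule closure_of_subset[OF openin_subset[OF that(1)]])
    ultimately show ?thesis using that by (auto simp: nonempty_regular_opens_def)
  qed
  have part1: "is_sheaf_for (nonempty_opens X) (\<subseteq>) (Gamma1 E X p) restr_sec
            (dense_covering (nonempty_opens X) (\<subseteq>))"
  proof (rule sheaf_generic[OF B P1o P1i])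
    fix q C assume q: "q \<in> nonempty_opens X" and Cv: "dense_covering (nonempty_opens X) (\<subseteq>) C q"
    have "q \<subseteq> X closure_of (\<Union>c\<in>C. c \<inter> q)"
    proof (rule closure_ofI2)
      show "q \<subseteq> topspace X" using q openin_subset[of X q] by (simp add: nonempty_opens_def)
      fix x T assume x: "x \<in> q" and T: "openin X T" "x \<in> T"
      have "openin X (T \<inter> q)" using T(1) q by (simp add: openin_Int nonempty_opens_def)
      hence "T \<inter> q \<in> nonempty_opens X" using T x by (auto simp: nonempty_opens_def)
      then obtain s c where s: "s \<in> nonempty_opens X" "c \<in> C" "s \<subseteq> T \<inter> q" "s \<subseteq> c"
        using Cv unfolding dense_covering_def by blast
      then obtain y where "y \<in> s" by (auto simp: nonempty_opens_def)
      thus "\<exists>y. y \<in> (\<Union>c\<in>C. c \<inter> q) \<and> y \<in> T" using s by blast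
    qed
    thus "C \<subseteq> nonempty_opens X \<and> q \<subseteq> X closure_of (\<Union>c\<in>C. c \<inter> q)"
      using Cv unfolding dense_covering_def by blast
  qed
  have P2o': "\<And>c. c \<in> nonempty_regular_opens X \<Longrightarrow> openin X c" using P2o by blast
  have part2: "is_sheaf_for (nonempty_regular_opens X) (\<subseteq>) (Gamma1 E X p) restr_sec
            (complete_covering (nonempty_regular_opens X) (\<subseteq>))"
  proof (rule sheaf_generic[OF B P2o' P2i])
    fix q C assume q: "q \<in> nonempty_regular_opens X" and Cv: "complete_covering (nonempty_regular_opens X) (\<subseteq>) C q"
    have CV: "C \<subseteq> nonempty_regular_opens X \<and> C \<noteq> {} \<and> (\<forall>c\<in>C. c \<subseteq> q) \<and> (\<forall>u\<in>nonempty_regular_opens X. (\<forall>c\<in>C. c \<subseteq> u) \<longrightarrow> q \<subseteq> u)"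
      using Cv unfolding complete_covering_def by blast
    have CP: "C \<subseteq> nonempty_regular_opens X" "C \<noteq> {}" "\<And>c. c \<in> C \<Longrightarrow> c \<subseteq> q"
      using CV by auto
    have sup: "\<And>u. u \<in> nonempty_regular_opens X \<Longrightarrow> (\<forall>c\<in>C. c \<subseteq> u) \<Longrightarrow> q \<subseteq> u"
      using CV by auto
    have eqU: "(\<Union>c\<in>C. c \<inter> q) = \<Union>C" using CP(3) by blast
    have Uo: "openin X (\<Union>C)" by (rule openin_Union) (use CP(1) P2o' in blast)
    obtain c0 where c0: "c0 \<in> C" using CP(2) by blast
    have "c0 \<noteq> {}" using CP(1) c0 by (auto simp: nonempty_regular_opens_def)
    hence Une: "\<Union>C \<noteq> {}" using c0 by blast
    have "X closure_of (\<Union>C) \<in> nonempty_regular_opens X" by (rule ROcl[OF Uo Une])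
    moreover have "\<forall>c\<in>C. c \<subseteq> X closure_of (\<Union>C)"
      using closure_of_subset[OF openin_subset[OF Uo]] by blast
    ultimately have "q \<subseteq> X closure_of (\<Union>C)" using sup by blast
    thus "C \<subseteq> nonempty_regular_opens X \<and> q \<subseteq> X closure_of (\<Union>c\<in>C. c \<inter> q)"
      using CP(1) eqU by simp
  qed
  have part3: "is_sheaf_for (nonempty_regular_opens X) (\<subseteq>) (Gamma1 E X p) restr_sec
            (dense_covering (nonempty_regular_opens X) (\<subseteq>))"
  proof (rule sheaf_generic[OF B P2o' P2i])
    fix q C assume q: "q \<in> nonempty_regular_opens X" and Cv: "dense_covering (nonempty_regular_opens X) (\<subseteq>) C q"
    have qoc: "openin X q" "closedin X q" using P2o[OF q] by auto
    have "q \<subseteq> X closure_of (\<Union>c\<in>C. c \<inter> q)"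
    proof (rule closure_ofI2)
      show "q \<subseteq> topspace X" using qoc openin_subset by blast
      fix x T assume x: "x \<in> q" and T: "openin X T" "x \<in> T"
      have Tq: "openin X (T \<inter> q)" using T(1) qoc(1) by (rule openin_Int)
      have "T \<inter> q \<noteq> {}" using x T by blast
      hence inP: "X closure_of (T \<inter> q) \<in> nonempty_regular_opens X" by (rule ROcl[OF Tq])
      have sub: "X closure_of (T \<inter> q) \<subseteq> q" by (rule closure_of_minimal) (use qoc in auto)
      obtain s c where s: "s \<in> nonempty_regular_opens X" "c \<in> C" "s \<subseteq> X closure_of (T \<inter> q)" "s \<subseteq> c"
        using Cv inP sub unfolding dense_covering_def by blast
      have so: "openin X s" using P2o'[OF s(1)] .
      have "s \<noteq> {}" using s(1) by (simp add: nonempty_regular_opens_def)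
      hence "s \<inter> X closure_of (T \<inter> q) \<noteq> {}" using s(3) by blast
      hence "s \<inter> (T \<inter> q) \<noteq> {}" using openin_Int_closure_of_eq_empty[OF so] by blast
      then obtain y where "y \<in> s" "y \<in> T" "y \<in> q" by blast
      thus "\<exists>y. y \<in> (\<Union>c\<in>C. c \<inter> q) \<and> y \<in> T" using s by blast
    qed
    thus "C \<subseteq> nonempty_regular_opens X \<and> q \<subseteq> X closure_of (\<Union>c\<in>C. c \<inter> q)"
      using Cv unfolding dense_covering_def by blast
  qed
  show ?thesis using part1 part2 part3 by blast
qed

end
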